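(* Let $\Sigma$ be a finite alphabet, let $y^* = y^*_1 \cdots y^*_n \in \Sigma^*$, let $p \in \Sigma^*$, and let $m(p) = \min_{0 \le j \le n} D(p, y^*_{1..j})$. Then $$\min_{s \in \Sigma^*} D(p\,s,\; y^* ) \;=\; m(p).$$ Moreover, the set of minimizers is exactly $$\{\, s \in \Sigma^* : D(p\,s, y^* ) = m(p)\,\} \;=\; \{\, y^*_{j+1..n} \;:\; 0 \le j \le n,\ D(p, y^*_{1..j}) = m(p) \,\}.$$ In words: the optimal completions of $p$ are exactly the suffixes $y^*_{j+1..n}$ of $y^*$ for which the prefix $y^*_{1..j}$ attains the minimum edit distance to $p$.
   Context: $D(u,v)$ denotes the Levenshtein edit distance between finite strings $u,v$: the minimum number of single-symbol insertions, deletions and substitutions needed to transform $u$ into $v$. For a string $y^*$ of length $n$, $y^*_{1..j}$ denotes its prefix of length $j$ and $y^*_{j+1..n}$ the complementary suffix; $y^*_{1..0}$ and $y^*_{n+1..n}$ are the empty string. Juxtaposition $p\,s$ denotes concatenation. *)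

theory Defs
  imports Main
begin

inductive edit_step :: "'a list \<Rightarrow> 'a list \<Rightarrow> bool" where
  ins: "edit_step (xs @ ys) (xs @ [a] @ ys)"
| del: "edit_step (xs @ [a] @ ys) (xs @ ys)"
| subst: "edit_step (xs @ [a] @ ys) (xs @ [b] @ ys)"

definition lev :: "'a list \<Rightarrow> 'a list \<Rightarrow> nat" where
  "lev u v = (LEAST k. (edit_step ^^ k) u v)"

end

theory Submission
  imports Defs
begin

lemma R_exists: "(edit_step ^^ (length u + length v)) u v"
proof -
  have d: "(edit_step ^^ length u) u []" for u :: "'a list"
  proof (induction u)
    case Nil then show ?case by simp
  next
    case (Cons a u)
    have "edit_step (a # u) u" using edit_step.del[of "[]" a u] by simp
    then show ?case using Cons relpowp_Suc_I2 by fastforce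
  qed
  have i: "(edit_step ^^ length v) [] v" for v :: "'a list"
  proof (induction v)
    case Nil then show ?case by simp
  next
    case (Cons a v)
    have "edit_step v (a # v)" using edit_step.ins[of "[]" v a] by simp
    then show ?case using Cons relpowp_Suc_I by fastforce
  qed
  show ?thesis using d i relpowp_add[of "length u" "length v" edit_step]
    by (metis relcompp.relcompI)
qed

lemma lev_R: "(edit_step ^^ lev u v) u v"
  unfolding lev_def by (rule LeastI_ex) (use R_exists in blast)

lemma lev_le: "(edit_step ^^ k) u v \<Longrightarrow> lev u v \<le> k"
  unfolding lev_def by (rule Least_le)

lemma lev_refl: "lev u u = 0"
  using lev_le[of 0 u u] by simp

lemma lev_zero: "lev u v = 0 \<Longrightarrow> u = v"
  using lev_R[of u v] by simp

lemma lev_trans: "lev a c \<le> lev a b + lev b c"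
proof -
  have "(edit_step ^^ (lev a b + lev b c)) a c"
    using lev_R[of a b] lev_R[of b c] relpowp_add[of "lev a b" "lev b c" edit_step]
    by (metis relcompp.relcompI)
  then show ?thesis by (rule lev_le)
qed

lemma step_app_right: "edit_step u u' \<Longrightarrow> edit_step (u @ v) (u' @ v)"
proof (induction rule: edit_step.induct)
  case (ins xs ys a) show ?case using edit_step.ins[of xs "ys @ v" a] by simp
next
  case (del xs a ys) show ?case using edit_step.del[of xs a "ys @ v"] by simp
next
  case (subst xs a ys b) show ?case using edit_step.subst[of xs a "ys @ v" b] by simp
qed

lemma step_app_left: "edit_step u u' \<Longrightarrow> edit_step (w @ u) (w @ u')"
proof (induction rule: edit_step.induct)
  case (ins xs ys a) show ?case using edit_step.ins[of "w @ xs" ys a] by simp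
next
  case (del xs a ys) show ?case using edit_step.del[of "w @ xs" a ys] by simp
next
  case (subst xs a ys b) show ?case using edit_step.subst[of "w @ xs" a ys b] by simp
qed

lemma R_app_right: "(edit_step ^^ k) u u' \<Longrightarrow> (edit_step ^^ k) (u @ v) (u' @ v)"
proof (induction k arbitrary: u')
  case 0 then show ?case by simp
next
  case (Suc k)
  then obtain y where "(edit_step ^^ k) u y" "edit_step y u'" by auto
  then show ?case using Suc.IH step_app_right relpowp_Suc_I by metis
qed

lemma R_app_left: "(edit_step ^^ k) u u' \<Longrightarrow> (edit_step ^^ k) (w @ u) (w @ u')"
proof (induction k arbitrary: u')
  case 0 then show ?case by simp
next
  case (Suc k)
  then obtain y where "(edit_step ^^ k) u y" "edit_step y u'" by auto
  then show ?case using Suc.IH step_app_left relpowp_Suc_I by metis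
qed

lemma lev_app: "lev (u @ v) (u' @ v') \<le> lev u u' + lev v v'"
proof -
  have "(edit_step ^^ (lev u u' + lev v v')) (u @ v) (u' @ v')"
    using R_app_right[OF lev_R[of u u'], of v] R_app_left[OF lev_R[of v v'], of u']
      relpowp_add[of "lev u u'" "lev v v'" edit_step]
    by (metis relcompp.relcompI)
  then show ?thesis by (rule lev_le)
qed

lemma lev_step: "edit_step u u' \<Longrightarrow> lev u u' \<le> 1"
proof -
  assume h: "edit_step u u'"
  have "(edit_step ^^ Suc 0) u u'" using relpowp_Suc_I[of 0 edit_step u u u', OF _ h] by simp
  then show ?thesis using lev_le by fastforce
qed

lemma hL: "edit_step u u' \<Longrightarrow> x = u' @ v \<Longrightarrow> \<exists>u' v'. x = u' @ v' \<and> lev u u' + lev v v' \<le> 1"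
  using lev_step[of u u'] lev_refl[of v] by (intro exI[of _ u'] exI[of _ v]) simp

lemma hR: "edit_step v v' \<Longrightarrow> x = u @ v' \<Longrightarrow> \<exists>u' v'. x = u' @ v' \<and> lev u u' + lev v v' \<le> 1"
  using lev_step[of v v'] lev_refl[of u] by (intro exI[of _ u] exI[of _ v']) simp

lemma step_split:
  assumes "edit_step (u @ v) x"
  shows "\<exists>u' v'. x = u' @ v' \<and> lev u u' + lev v v' \<le> 1"
  using assms
proof (cases rule: edit_step.cases)
  case (ins xs ys a)
  from append_eq_append_conv2[THEN iffD1, OF ins(1)] obtain us where "(u = xs @ us \<and> us @ v = ys) \<or> (u @ us = xs \<and> v = us @ ys)"
    by blast
  then show ?thesis
  proof
    assume h: "u = xs @ us \<and> us @ v = ys"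
    have st: "edit_step u (xs @ [a] @ us)" using h edit_step.ins[of xs us a] by simp
    have "x = (xs @ [a] @ us) @ v" using h ins(2) by simp
    then show ?thesis by (rule hL[OF st])
  next
    assume h: "u @ us = xs \<and> v = us @ ys"
    have st: "edit_step v (us @ [a] @ ys)" using h edit_step.ins[of us ys a] by simp
    have "x = u @ (us @ [a] @ ys)" using h ins(2) by simp
    then show ?thesis by (rule hR[OF st])
  qed
next
  case (del xs a ys)
  from append_eq_append_conv2[THEN iffD1, OF del(1)] obtain us where "(u = xs @ us \<and> us @ v = [a] @ ys) \<or> (u @ us = xs \<and> v = us @ [a] @ ys)"
    by blast
  then show ?thesis
  proof
    assume h: "u = xs @ us \<and> us @ v = [a] @ ys"
    show ?thesis
    proof (cases us)
      case Nil
      then have "v = [] @ [a] @ ys" using h by simp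
      then have st: "edit_step v ys" using edit_step.del[of "[]" a ys] by simp
      have "x = u @ ys" using h del(2) Nil by simp
      then show ?thesis by (rule hR[OF st])
    next
      case (Cons b us')
      then have hb: "b = a" "ys = us' @ v" using h by auto
      have st: "edit_step u (xs @ us')" using h Cons hb edit_step.del[of xs a us'] by simp
      have "x = (xs @ us') @ v" using del(2) hb by simp
      then show ?thesis by (rule hL[OF st])
    qed
  next
    assume h: "u @ us = xs \<and> v = us @ [a] @ ys"
    have st: "edit_step v (us @ ys)" using h edit_step.del[of us a ys] by simp
    have "x = u @ (us @ ys)" using h del(2) by simp
    then show ?thesis by (rule hR[OF st])
  qed
next
  case (subst xs a ys b)
  from append_eq_append_conv2[THEN iffD1, OF subst(1)] obtain us where "(u = xs @ us \<and> us @ v = [a] @ ys) \<or> (u @ us = xs \<and> v = us @ [a] @ ys)"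
    by blast
  then show ?thesis
  proof
    assume h: "u = xs @ us \<and> us @ v = [a] @ ys"
    show ?thesis
    proof (cases us)
      case Nil
      then have "v = [] @ [a] @ ys" using h by simp
      then have st: "edit_step v ([b] @ ys)" using edit_step.subst[of "[]" a ys b] by simp
      have "x = u @ ([b] @ ys)" using h subst(2) Nil by simp
      then show ?thesis by (rule hR[OF st])
    next
      case (Cons c us')
      then have hb: "c = a" "ys = us' @ v" using h by auto
      have st: "edit_step u (xs @ [b] @ us')" using h Cons hb edit_step.subst[of xs a us' b] by simp
      have "x = (xs @ [b] @ us') @ v" using subst(2) hb by simp
      then show ?thesis by (rule hL[OF st])
    qed
  next
    assume h: "u @ us = xs \<and> v = us @ [a] @ ys"
    have st: "edit_step v (us @ [b] @ ys)" using h edit_step.subst[of us a ys b] by simp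
    have "x = u @ (us @ [b] @ ys)" using h subst(2) by simp
    then show ?thesis by (rule hR[OF st])
  qed
qed

lemma R_split:
  "(edit_step ^^ k) (u @ v) w \<Longrightarrow>
     \<exists>j \<le> length w. lev u (take j w) + lev v (drop j w) \<le> k"
proof (induction k arbitrary: u v)
  case 0
  then show ?case using lev_refl by (intro exI[of _ "length u"]) auto
next
  case (Suc k)
  then obtain x where x: "edit_step (u @ v) x" "(edit_step ^^ k) x w"
    using relpowp_Suc_D2 by metis
  obtain u' v' where uv: "x = u' @ v'" "lev u u' + lev v v' \<le> 1"
    using step_split[OF x(1)] by blast
  obtain j where j: "j \<le> length w" "lev u' (take j w) + lev v' (drop j w) \<le> k"
    using Suc.IH[of u' v'] x(2) uv(1) by blast
  have "lev u (take j w) \<le> lev u u' + lev u' (take j w)" by (rule lev_trans)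
  moreover have "lev v (drop j w) \<le> lev v v' + lev v' (drop j w)" by (rule lev_trans)
  ultimately show ?case using j uv by (intro exI[of _ j]) auto
qed

lemma lev_split:
  "\<exists>j \<le> length w. lev u (take j w) + lev v (drop j w) \<le> lev (u @ v) w"
  using R_split[OF lev_R] .

theorem mainTheorem2:
  fixes ys p :: "'a::finite list"
  defines "m \<equiv> Min ((\<lambda>j. lev p (take j ys)) ` {0..length ys})"
  shows "(INF s. lev (p @ s) ys) = m
     \<and> {s. lev (p @ s) ys = m} = {drop j ys | j. j \<le> length ys \<and> lev p (take j ys) = m}"
proof -
  have fin: "finite ((\<lambda>j. lev p (take j ys)) ` {0..length ys})" by simp
  have mle: "m \<le> lev p (take j ys)" if "j \<le> length ys" for j
    unfolding m_def using that by (intro Min_le[OF fin]) auto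
  have lower: "m \<le> lev (p @ s) ys" for s
  proof -
    obtain j where "j \<le> length ys" "lev p (take j ys) + lev s (drop j ys) \<le> lev (p @ s) ys"
      using lev_split by blast
    then show ?thesis using mle[of j] by simp
  qed
  have upper: "lev (p @ drop j ys) ys \<le> lev p (take j ys)" for j
    using lev_app[of p "drop j ys" "take j ys" "drop j ys"] lev_refl[of "drop j ys"] by simp
  have "m \<in> (\<lambda>j. lev p (take j ys)) ` {0..length ys}"
    unfolding m_def by (rule Min_in[OF fin]) auto
  then obtain j0 where j0: "j0 \<le> length ys" "lev p (take j0 ys) = m" by auto
  have att: "lev (p @ drop j0 ys) ys = m" using upper[of j0] lower[of "drop j0 ys"] j0 by simp
  have inf: "(INF s. lev (p @ s) ys) = m"
    by (rule cInf_eq_minimum) (use att lower in auto)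
  have set: "{s. lev (p @ s) ys = m} = {drop j ys | j. j \<le> length ys \<and> lev p (take j ys) = m}"
  proof (intro equalityI subsetI)
    fix s assume "s \<in> {s. lev (p @ s) ys = m}"
    then have hs: "lev (p @ s) ys = m" by simp
    obtain j where j: "j \<le> length ys" "lev p (take j ys) + lev s (drop j ys) \<le> lev (p @ s) ys"
      using lev_split by blast
    have "lev s (drop j ys) = 0" "lev p (take j ys) = m" using j hs mle[of j] by auto
    then show "s \<in> {drop j ys | j. j \<le> length ys \<and> lev p (take j ys) = m}"
      using lev_zero j(1) by blast
  next
    fix s assume "s \<in> {drop j ys | j. j \<le> length ys \<and> lev p (take j ys) = m}"
    then obtain j where "s = drop j ys" "lev p (take j ys) = m" by auto
    then show "s \<in> {s. lev (p @ s) ys = m}" using upper[of j] lower[of s] by simp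
  qed
  show ?thesis using inf set by blast
qed

end
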